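(* For all $n\in\mathbb N$ the following holds in the $q$-shuffle algebra $\mathbb V$: $$C_n=(-1)^n\sum_{i=0}^n q^{2i-n}D_i\star D_{n-i}.$$
   Context: Let $\mathbb F$ be a field and let $q\in\mathbb F$ be nonzero and not a root of unity. Let $[m]_q=(q^m-q^{-m})/(q-q^{-1})$. Let $\mathbb V$ be the free associative $\mathbb F$-algebra on noncommuting $x,y$, with basis the words (including $1$). Juxtaposition denotes concatenation. Set $\langle x,x\rangle=\langle y,y\rangle=2$ and $\langle x,y\rangle=\langle y,x\rangle=-2$. The $q$-shuffle product $\star$ is the bilinear product determined as follows: - $1\star v=v\star 1=v$; - for nontrivial words $u=u_1\cdots u_r$ and $v=v_1\cdots v_s$, $$u\star v=u_1((u_2\cdots u_r)\star v)+v_1(u\star(v_2\cdots v_s))q^{\langle u_1,v_1\rangle+\cdots+\langle u_r,v_1\rangle}.$$ This makes $\mathbb V$ an associative algebra, the $q$-shuffle algebra. For $k\in\mathbb N$, let $\tilde G_k=xyxy\cdots xy$ be the word of length $2k$, with $\tilde G_0=1$. Define $D_0=1$ and, for $n\ge1$, define $D_n$ recursively by $\sum_{i=0}^n D_i\star\tilde G_{n-i}=0$. Let $\overline x=1$ and $\overline y=-1$. A word $v_1\cdots v_m$ is Catalan if $\overline v_1+\cdots+\overline v_i\ge0$ for $1\le i\le m-1$ and $\overline v_1+\cdots+\overline v_m=0$. For $n\in\mathbb N$, $$C_n=\sum v_1\cdots v_{2n}\,[1]_q[1+\overline v_1]_q\cdots[1+\overline v_1+\cdots+\overline v_{2n}]_q,$$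 where the sum is over Catalan words of length $2n$ (so $C_0=1$). *)

theory Defs
  imports Main
begin

text \<open>An element of the q-shuffle
algebra is represented by its coefficient function on words
(type letter list => 'a); all elements used below have finite support.\<close>

datatype letter = X | Y

type_synonym 'a vec = "letter list \<Rightarrow> 'a"

definition pair :: "letter \<Rightarrow> letter \<Rightarrow> int" where
  "pair a b = (if a = b then 2 else -2)"

definition word :: "letter list \<Rightarrow> 'a::field vec" where
  "word v = (\<lambda>w. if w = v then 1 else 0)"

definition prefix_vec :: "letter \<Rightarrow> 'a::field vec \<Rightarrow> 'a vec" where
  "prefix_vec a f = (\<lambda>w. case w of [] \<Rightarrow> 0 | c # w' \<Rightarrow> (if c = a then f w' else 0))"

definition add_vec :: "'a::field vec \<Rightarrow> 'a vec \<Rightarrow> 'a vec" where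
  "add_vec f g = (\<lambda>w. f w + g w)"

definition smult_vec :: "'a::field \<Rightarrow> 'a vec \<Rightarrow> 'a vec" where
  "smult_vec c f = (\<lambda>w. c * f w)"

definition zero_vec :: "'a::field vec" where
  "zero_vec = (\<lambda>w. 0)"

definition sum_vec :: "(nat \<Rightarrow> 'a::field vec) \<Rightarrow> nat set \<Rightarrow> 'a vec" where
  "sum_vec F I = (\<lambda>w. \<Sum>i\<in>I. F i w)"

fun qshuffle_word :: "'a::field \<Rightarrow> letter list \<Rightarrow> letter list \<Rightarrow> 'a vec" where
  "qshuffle_word q [] v = word v"
| "qshuffle_word q (a # u) [] = word (a # u)"
| "qshuffle_word q (a # u) (b # v) =
     add_vec (prefix_vec a (qshuffle_word q u (b # v)))
             (smult_vec (q powi (sum_list (map (\<lambda>c. pair c b) (a # u))))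
                        (prefix_vec b (qshuffle_word q (a # u) v)))"

text \<open>Bilinear extension of the q-shuffle product.  The coefficient of a word w
in u \<star> v is zero unless length u + length v = length w, so the sum is finite.\<close>
definition qshuffle :: "'a::field \<Rightarrow> 'a vec \<Rightarrow> 'a vec \<Rightarrow> 'a vec" where
  "qshuffle q f g = (\<lambda>w. \<Sum>k\<le>length w.
      \<Sum>u\<in>{u. length u = k}. \<Sum>v\<in>{v. length v = length w - k}.
        f u * g v * qshuffle_word q u v w)"

definition Gt :: "nat \<Rightarrow> 'a::field vec" where
  "Gt k = word (concat (replicate k [X, Y]))"

text \<open>D_0 = 1 and sum_{i=0}^n D_i \<star> G~_{n-i} = 0 for n >= 1, i.e.
D_n = - sum_{i<n} D_i \<star> G~_{n-i} (as G~_0 = 1 is the unit).\<close>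
function D :: "'a::field \<Rightarrow> nat \<Rightarrow> 'a vec" where
  "D q n = (if n = 0 then word []
            else (\<lambda>w. - (\<Sum>i<n. qshuffle q (D q i) (Gt (n - i)) w)))"
  by auto
termination by (relation "measure (\<lambda>(q, n). n)") auto

definition qint :: "'a::field \<Rightarrow> int \<Rightarrow> 'a" where
  "qint q m = (q powi m - q powi (-m)) / (q - inverse q)"

definition bar :: "letter \<Rightarrow> int" where
  "bar a = (if a = X then 1 else -1)"

definition psum :: "letter list \<Rightarrow> nat \<Rightarrow> int" where
  "psum w i = sum_list (map bar (take i w))"

definition catalan :: "letter list \<Rightarrow> bool" where
  "catalan w \<longleftrightarrow> (\<forall>i. 1 \<le> i \<and> i \<le> length w - 1 \<longrightarrow> psum w i \<ge> 0) \<and> psum w (length w) = 0"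

definition C :: "'a::field \<Rightarrow> nat \<Rightarrow> 'a vec" where
  "C q n = (\<lambda>w. if catalan w \<and> length w = 2 * n
               then (\<Prod>i\<le>2 * n. qint q (1 + psum w i)) else 0)"

end

theory Submission
  imports Defs
begin

lemma len_Suc_set:
  "{u::letter list. length u = Suc k} = (Cons X) ` {u. length u = k} \<union> (Cons Y) ` {u. length u = k}"
proof -
  have "\<And>u. length u = Suc k \<Longrightarrow> u \<in> (Cons X) ` {u. length u = k} \<union> (Cons Y) ` {u. length u = k}"
  proof -
    fix u :: "letter list" assume "length u = Suc k"
    then obtain c u' where "u = c # u'" "length u' = k" by (cases u) auto
    then show "?thesis u" by (cases c) auto
  qed
  then show ?thesis by auto
qed

lemma finite_len: "finite {u::letter list. length u = k}"
  by (induction k) (simp_all add: len_Suc_set)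

lemma sum_len_Suc:
  "(\<Sum>u\<in>{u::letter list. length u = Suc k}. h u) = (\<Sum>u\<in>{u. length u = k}. h (X # u) + h (Y # u))"
proof -
  have "(\<Sum>u\<in>{u::letter list. length u = Suc k}. h u) =
     (\<Sum>u\<in>(Cons X) ` {u. length u = k}. h u) + (\<Sum>u\<in>(Cons Y) ` {u. length u = k}. h u)"
    unfolding len_Suc_set by (rule sum.union_disjoint) (auto simp: finite_len)
  also have "\<dots> = (\<Sum>u\<in>{u. length u = k}. h (X # u)) + (\<Sum>u\<in>{u. length u = k}. h (Y # u))"
    by (simp add: sum.reindex)
  finally show ?thesis by (simp add: sum.distrib)
qed

definition ps :: "letter list \<Rightarrow> letter \<Rightarrow> int" where
  "ps u c = sum_list (map (\<lambda>d. pair d c) u)"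

definition dv :: "letter \<Rightarrow> 'a::field vec \<Rightarrow> 'a vec" where
  "dv c f = (\<lambda>w. f (c # w))"

definition tw :: "'a::field \<Rightarrow> letter \<Rightarrow> 'a vec \<Rightarrow> 'a vec" where
  "tw q c f = (\<lambda>u. q powi (ps u c) * f u)"

lemma qsw_Nil2: "qshuffle_word q u [] = word u"
  by (cases u) auto

lemma qsw_Cons:
  "qshuffle_word q u v (c # w) =
     (case u of [] \<Rightarrow> 0 | d # u' \<Rightarrow> if d = c then qshuffle_word q u' v w else 0) +
     (case v of [] \<Rightarrow> 0 | d # v' \<Rightarrow> if d = c then q powi (ps u c) * qshuffle_word q u v' w else 0)"
proof (cases u)
  case Nil
  then show ?thesis by (cases v) (auto simp: word_def ps_def)
next
  case (Cons a u')
  then show ?thesis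
  proof (cases v)
    case Nil
    then show ?thesis using Cons by (auto simp: word_def qsw_Nil2)
  next
    case (Cons b v')
    then show ?thesis using \<open>u = a # u'\<close>
      by (auto simp: add_vec_def smult_vec_def prefix_vec_def ps_def)
  qed
qed

lemma qshuffle_Nil: "qshuffle q f g [] = f [] * g []"
proof -
  have "{u::letter list. length u = 0} = {[]}" by auto
  then show ?thesis by (simp add: qshuffle_def word_def)
qed

lemma qshuffle_Cons:
  "qshuffle q f g (c # w) = qshuffle q (dv c f) g w + qshuffle q (tw q c f) (dv c g) w"
proof -
  let ?m = "length w"
  define T1 where "T1 u v = (case u of [] \<Rightarrow> 0 | d # u' \<Rightarrow> if d = c then qshuffle_word q u' v w else 0)" for u v
  define T2 where "T2 u v = (case v of [] \<Rightarrow> 0 | d # v' \<Rightarrow> if d = c then q powi (ps u c) * qshuffle_word q u v' w else 0)" for u v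
  have "qshuffle q f g (c # w) = (\<Sum>k\<le>Suc ?m. \<Sum>u\<in>{u. length u = k}. \<Sum>v\<in>{v. length v = Suc ?m - k}.
        f u * g v * T1 u v) + (\<Sum>k\<le>Suc ?m. \<Sum>u\<in>{u. length u = k}. \<Sum>v\<in>{v. length v = Suc ?m - k}.
        f u * g v * T2 u v)"
    by (simp add: qshuffle_def qsw_Cons T1_def T2_def distrib_left sum.distrib)
  also have "(\<Sum>k\<le>Suc ?m. \<Sum>u\<in>{u. length u = k}. \<Sum>v\<in>{v. length v = Suc ?m - k}.
        f u * g v * T1 u v) = qshuffle q (dv c f) g w"
  proof -
    have "(\<Sum>k\<le>Suc ?m. \<Sum>u\<in>{u. length u = k}. \<Sum>v\<in>{v. length v = Suc ?m - k}. f u * g v * T1 u v)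
      = (\<Sum>k\<le>?m. \<Sum>u\<in>{u. length u = Suc k}. \<Sum>v\<in>{v. length v = ?m - k}. f u * g v * T1 u v)"
      by (subst sum.atMost_Suc_shift) (simp add: T1_def)
    also have "\<dots> = qshuffle q (dv c f) g w"
      unfolding sum_len_Suc qshuffle_def dv_def
      by (cases c) (simp_all add: T1_def sum.distrib)
    finally show ?thesis .
  qed
  also have "(\<Sum>k\<le>Suc ?m. \<Sum>u\<in>{u. length u = k}. \<Sum>v\<in>{v. length v = Suc ?m - k}.
        f u * g v * T2 u v) = qshuffle q (tw q c f) (dv c g) w"
  proof -
    have "(\<Sum>k\<le>Suc ?m. \<Sum>u\<in>{u. length u = k}. \<Sum>v\<in>{v. length v = Suc ?m - k}. f u * g v * T2 u v)
      = (\<Sum>k\<le>?m. \<Sum>u\<in>{u. length u = k}. \<Sum>v\<in>{v. length v = Suc (?m - k)}. f u * g v * T2 u v)"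
      by (simp add: T2_def Suc_diff_le)
    also have "\<dots> = qshuffle q (tw q c f) (dv c g) w"
      unfolding sum_len_Suc qshuffle_def dv_def tw_def
      by (cases c) (simp_all add: T2_def sum.distrib ac_simps)
    finally show ?thesis .
  qed
  finally show ?thesis .
qed

lemma qshuffle_smult_left: "qshuffle q (\<lambda>u. a * f u) g w = a * qshuffle q f g w"
  by (simp add: qshuffle_def sum_distrib_left ac_simps)

lemma qshuffle_smult_right: "qshuffle q f (\<lambda>u. a * g u) w = a * qshuffle q f g w"
  by (simp add: qshuffle_def sum_distrib_left ac_simps)

lemma qshuffle_zero_right: "qshuffle q f (\<lambda>u. 0) w = 0"
  by (simp add: qshuffle_def)

lemma qshuffle_zero_left: "qshuffle q (\<lambda>u. 0) g w = 0"
  by (simp add: qshuffle_def)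

lemma qshuffle_pointwise:
  assumes "finite I"
    and "\<And>u v. length u + length v = length w \<Longrightarrow> f u * g v = (\<Sum>i\<in>I. F i u * G i v)"
  shows "qshuffle q f g w = (\<Sum>i\<in>I. qshuffle q (F i) (G i) w)"
proof -
  have "qshuffle q f g w = (\<Sum>k\<le>length w. \<Sum>u\<in>{u. length u = k}. \<Sum>v\<in>{v. length v = length w - k}.
          \<Sum>i\<in>I. F i u * G i v * qshuffle_word q u v w)"
    unfolding qshuffle_def
    by (intro sum.cong refl) (simp add: assms(2) sum_distrib_right)
  also have "\<dots> = (\<Sum>i\<in>I. qshuffle q (F i) (G i) w)"
    unfolding qshuffle_def
    by (simp add: sum.swap[of _ I])
  finally show ?thesis .
qed

lemma qshuffle_unit: "qshuffle q f (word []) w = f w"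
proof (induction w arbitrary: f)
  case Nil
  then show ?case by (simp add: qshuffle_Nil word_def)
next
  case (Cons c w)
  have z: "dv c (word []) = (\<lambda>u. 0)" by (simp add: dv_def word_def)
  show ?case by (simp only: qshuffle_Cons Cons z qshuffle_zero_right) (simp add: dv_def)
qed

lemma qint0[simp]: "qint q 0 = 0"
  by (simp add: qint_def)

lemma qint_add:
  assumes "(q::'a::field) \<noteq> 0"
  shows "qint q (m + n) = q powi n * qint q m + q powi (- m) * qint q n"
proof -
  have "q powi (m + n) - q powi (- (m + n)) =
        q powi n * (q powi m - q powi (- m)) + q powi (- m) * (q powi n - q powi (- n))"
  proof -
    have "q powi (m + n) = q powi m * q powi n" "q powi (- (m + n)) = q powi (- m) * q powi (- n)"
      using assms by (simp_all add: power_int_add[symmetric])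
    then show ?thesis by (simp add: algebra_simps)
  qed
  then show ?thesis by (simp add: qint_def add_divide_distrib[symmetric] algebra_simps)
qed

lemma qint1:
  assumes "(q::'a::field) \<noteq> 0" "q ^ 2 \<noteq> 1"
  shows "qint q 1 = 1"
proof -
  have "q - inverse q \<noteq> 0"
  proof
    assume "q - inverse q = 0"
    then have "q * q = q * inverse q" by simp
    then have "q ^ 2 = 1" using assms(1) by (simp add: power2_eq_square)
    then show False using assms(2) by simp
  qed
  then show ?thesis by (simp add: qint_def)
qed

lemma pair_bar: "pair d c = 2 * bar d * bar c"
  by (cases d; cases c) (auto simp: pair_def bar_def)

lemma ps_bar: "ps u c = 2 * bar c * sum_list (map bar u)"
  by (induction u) (auto simp: ps_def pair_bar algebra_simps)

fun fwt :: "'a::field \<Rightarrow> 'a \<Rightarrow> nat \<Rightarrow> letter list \<Rightarrow> 'a" where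
  "fwt q s a [] = (if a = 0 then 1 else 0)"
| "fwt q s a (X # w) = s * qint q (int a + 1) * fwt q s (Suc a) w"
| "fwt q s a (Y # w) = qint q (int a) * fwt q s (a - 1) w"

fun rw :: "'a::field \<Rightarrow> nat \<Rightarrow> letter list \<Rightarrow> 'a" where
  "rw q a [] = (if a = 0 then 1 else 0)"
| "rw q a (X # w) = qint q (int a + 2) * rw q (Suc a) w"
| "rw q a (Y # w) = qint q (int a) * rw q (a - 1) w"

lemma fwt_bar: "fwt q s a u \<noteq> 0 \<Longrightarrow> sum_list (map bar u) = - int a"
proof (induction u arbitrary: a)
  case Nil
  then show ?case by (simp split: if_splits)
next
  case (Cons c u)
  show ?case
  proof (cases c)
    case X
    then show ?thesis using Cons by (auto simp: bar_def)
  next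
    case Y
    with Cons.prems have "a \<noteq> 0" "fwt q s (a - 1) u \<noteq> 0" by (cases a; auto)+
    then show ?thesis using Cons.IH[of "a - 1"] Y by (auto simp: bar_def)
  qed
qed

lemma tw_fwt: "tw q c (fwt q s a) = (\<lambda>u. q powi (- 2 * bar c * int a) * fwt q s a u)"
proof
  fix u show "tw q c (fwt q s a) u = q powi (- 2 * bar c * int a) * fwt q s a u"
    by (cases "fwt q s a u = 0") (auto simp: tw_def ps_bar fwt_bar)
qed

lemma dvX_fwt: "dv X (fwt q s a) = (\<lambda>u. (s * qint q (int a + 1)) * fwt q s (Suc a) u)"
  by (simp add: dv_def)
lemma dvY_fwt: "dv Y (fwt q s a) = (\<lambda>u. qint q (int a) * fwt q s (a - 1) u)"
  by (simp add: dv_def)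

lemma powi_comb: "(q::'a::field) \<noteq> 0 \<Longrightarrow> q powi m * q powi n = q powi (m + n)"
  by (simp add: power_int_add)

lemma tw_fwt_X: "tw q X (fwt q s a) = (\<lambda>u. q powi (- 2 * int a) * fwt q s a u)"
  by (simp add: tw_fwt bar_def)
lemma tw_fwt_Y: "tw q Y (fwt q s a) = (\<lambda>u. q powi (2 * int a) * fwt q s a u)"
  by (simp add: tw_fwt bar_def)

lemma reorder: "(a1::'a::comm_ring) * b1 = c1 * d1 \<Longrightarrow> a1 * e1 * b1 = c1 * (d1 * e1)"
proof -
  assume h: "a1 * b1 = c1 * d1"
  have "a1 * e1 * b1 = (a1 * b1) * e1" by (simp add: ac_simps)
  also have "\<dots> = (c1 * d1) * e1" by (simp only: h)
  also have "\<dots> = c1 * (d1 * e1)" by (simp add: ac_simps)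
  finally show ?thesis .
qed

lemma reorder2: "(a1::'a::comm_ring) * f1 * b1 = c1 * d1 \<Longrightarrow> a1 * (f1 * e1) * b1 = c1 * (d1 * e1)"
proof -
  assume h: "a1 * f1 * b1 = c1 * d1"
  have "a1 * (f1 * e1) * b1 = (a1 * f1 * b1) * e1" by (simp add: ac_simps)
  also have "\<dots> = (c1 * d1) * e1" by (simp only: h)
  also have "\<dots> = c1 * (d1 * e1)" by (simp add: ac_simps)
  finally show ?thesis .
qed

lemma scalarC_X:
  assumes q: "(q::'a::field) \<noteq> 0"
  shows "q powi 1 * qint q (int a + 1) * q powi (int (Suc a) * int b)
       + q powi (- 2 * int a) * (q powi (-1) * qint q (int b + 1)) * q powi (int a * int (Suc b))
       = q powi (int a * int b) * qint q (int (a + b) + 2)"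
proof -
  have e: "int (a + b) + 2 = (int a + 1) + (int b + 1)" by simp
  have 1: "q powi 1 * qint q (int a + 1) * q powi (int (Suc a) * int b)
     = q powi (int a * int b) * (q powi (int b + 1) * qint q (int a + 1))"
  proof -
    have "q powi 1 * q powi (int (Suc a) * int b) = q powi (int a * int b) * q powi (int b + 1)"
      by (simp only: powi_comb[OF q]) (simp add: algebra_simps)
    then show ?thesis by (rule reorder)
  qed
  have 2: "q powi (- 2 * int a) * (q powi (-1) * qint q (int b + 1)) * q powi (int a * int (Suc b))
     = q powi (int a * int b) * (q powi (- (int a + 1)) * qint q (int b + 1))"
  proof -
    have "q powi (- 2 * int a) * q powi (-1) * q powi (int a * int (Suc b))
       = q powi (int a * int b) * q powi (- (int a + 1))"
      by (simp only: powi_comb[OF q]) (simp add: algebra_simps)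
    then show ?thesis by (rule reorder2)
  qed
  have 3: "qint q (int (a + b) + 2) = q powi (int b + 1) * qint q (int a + 1) + q powi (- (int a + 1)) * qint q (int b + 1)"
    unfolding e by (rule qint_add[OF q])
  show ?thesis unfolding 1 2 3 by (simp only: distrib_left)
qed

lemma scalarC_Y:
  assumes q: "(q::'a::field) \<noteq> 0"
  shows "qint q (int (Suc a)) * q powi (int a * int (Suc b))
       + q powi (2 * int (Suc a)) * qint q (int (Suc b)) * q powi (int (Suc a) * int b)
       = q powi (int (Suc a) * int (Suc b)) * qint q (int (Suc a + Suc b))"
proof -
  let ?A = "int (Suc a)" and ?B = "int (Suc b)"
  have 3: "qint q (int (Suc a + Suc b)) = q powi ?A * qint q ?B + q powi (- ?B) * qint q ?A"
    using qint_add[OF q, of ?B ?A] by (simp add: add.commute)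
  have 1: "q powi (int (Suc a) * int (Suc b)) * q powi ?A = q powi (2 * int (Suc a)) * q powi (int (Suc a) * int b)"
    by (simp only: powi_comb[OF q]) (simp add: algebra_simps)
  have 2: "q powi (int (Suc a) * int (Suc b)) * q powi (- ?B) = q powi (int a * int (Suc b))"
    by (simp only: powi_comb[OF q]) (simp add: algebra_simps)
  have "q powi (int (Suc a) * int (Suc b)) * qint q (int (Suc a + Suc b))
     = (q powi (int (Suc a) * int (Suc b)) * q powi ?A) * qint q ?B + (q powi (int (Suc a) * int (Suc b)) * q powi (- ?B)) * qint q ?A"
    unfolding 3 by (simp add: algebra_simps)
  also have "\<dots> = qint q (int (Suc a)) * q powi (int a * int (Suc b))
       + q powi (2 * int (Suc a)) * qint q (int (Suc b)) * q powi (int (Suc a) * int b)"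
    unfolding 1 2 by (simp add: ac_simps)
  finally show ?thesis by simp
qed

lemma lemmaC:
  assumes q: "(q::'a::field) \<noteq> 0"
  shows "qshuffle q (fwt q q a) (fwt q (inverse q) b) w = q powi (int a * int b) * rw q (a + b) w"
proof (induction w arbitrary: a b)
  case Nil
  then show ?case by (simp add: qshuffle_Nil)
next
  case (Cons c w)
  show ?case
  proof (cases c)
    case X
    have "qshuffle q (fwt q q a) (fwt q (inverse q) b) (c # w)
      = q * qint q (int a + 1) * (q powi (int (Suc a) * int b) * rw q (Suc a + b) w)
       + q powi (- 2 * int a) * (inverse q * qint q (int b + 1)) * (q powi (int a * int (Suc b)) * rw q (a + Suc b) w)"
      unfolding X qshuffle_Cons dvX_fwt tw_fwt_X qshuffle_smult_left qshuffle_smult_right Cons.IH by (simp only: mult.assoc)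
    also have "\<dots> = (q * qint q (int a + 1) * q powi (int (Suc a) * int b)
       + q powi (- 2 * int a) * (inverse q * qint q (int b + 1)) * q powi (int a * int (Suc b))) * rw q (Suc (a + b)) w"
      by (simp add: algebra_simps)
    also have "\<dots> = q powi (int a * int b) * qint q (int (a + b) + 2) * rw q (Suc (a + b)) w"
      using scalarC_X[OF q, of a b] by simp
    finally show ?thesis using X by simp
  next
    case Y
    show ?thesis
    proof (cases a)
      case 0
      then show ?thesis
        unfolding Y qshuffle_Cons dvY_fwt tw_fwt_Y qshuffle_smult_left qshuffle_smult_right Cons.IH
        by simp
    next
      case (Suc a')
      show ?thesis
      proof (cases b)
        case 0
        then show ?thesis
          unfolding Y Suc qshuffle_Cons dvY_fwt tw_fwt_Y qshuffle_smult_left qshuffle_smult_right Cons.IH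
          by simp
      next
        case (Suc b')
        have "qshuffle q (fwt q q a) (fwt q (inverse q) b) (c # w)
          = (qint q (int (Suc a')) * q powi (int a' * int (Suc b'))
       + q powi (2 * int (Suc a')) * qint q (int (Suc b')) * q powi (int (Suc a') * int b')) * rw q (a' + Suc b') w"
          unfolding Y Suc \<open>a = Suc a'\<close> qshuffle_Cons dvY_fwt tw_fwt_Y qshuffle_smult_left qshuffle_smult_right Cons.IH
          by (simp add: algebra_simps)
        also have "\<dots> = q powi (int (Suc a') * int (Suc b')) * qint q (int (Suc a' + Suc b')) * rw q (a' + Suc b') w"
          unfolding scalarC_Y[OF q] ..
        finally show ?thesis using Y Suc \<open>a = Suc a'\<close> by simp
      qed
    qed
  qed
qed

fun uw :: "'a::field \<Rightarrow> nat \<Rightarrow> letter list \<Rightarrow> 'a" where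
  "uw q a [] = (if a = 0 then 1 else 0)"
| "uw q a (X # w) = - q * qint q (int a) * uw q (Suc a) w"
| "uw q a (Y # w) = qint q (int a) * uw q (a - 1) w"

fun gs :: "letter list \<Rightarrow> 'a::field" and hs :: "letter list \<Rightarrow> 'a::field" where
  "gs [] = 1"
| "gs (X # w) = hs w"
| "gs (Y # w) = 0"
| "hs [] = 0"
| "hs (X # w) = 0"
| "hs (Y # w) = gs w"

lemma dv_gs_X: "dv X gs = hs" and dv_gs_Y: "dv Y gs = (\<lambda>u. 0)"
  and dv_hs_X: "dv X hs = (\<lambda>u. 0)" and dv_hs_Y: "dv Y hs = gs"
  by (simp_all add: dv_def fun_eq_iff)

lemma scalarB1:
  assumes q: "(q::'a::field) \<noteq> 0" and q2: "q ^ 2 \<noteq> 1"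
  shows "- qint q (int a + 1) + q powi (- 2 * int a) * q ^ a = - q * qint q (int a)"
proof -
  have "qint q (int a + 1) = q powi 1 * qint q (int a) + q powi (- int a) * qint q 1"
    by (rule qint_add[OF q])
  moreover have "q powi (- 2 * int a) * q ^ a = q powi (- int a)"
  proof -
    have "q powi (- 2 * int a) * q powi (int a) = q powi (- int a)"
      by (simp only: powi_comb[OF q]) simp
    then show ?thesis by simp
  qed
  ultimately show ?thesis using qint1[OF q q2] by simp
qed

lemma scalarB2:
  assumes q: "(q::'a::field) \<noteq> 0" and that: "qint q 1 = 1"
  shows "qint q (int (Suc a)) * q ^ a + q powi (2 * int (Suc a)) = q ^ Suc a * qint q (int (Suc (Suc a)))"
proof -
  have h: "int (Suc (Suc a)) = 1 + int (Suc a)" by simp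
  have "qint q (int (Suc (Suc a))) = q powi (int (Suc a)) * qint q 1 + q powi (- 1) * qint q (int (Suc a))"
    unfolding h by (rule qint_add[OF q])
  then have e: "qint q (int (Suc (Suc a))) = q ^ Suc a + inverse q * qint q (int (Suc a))"
    using that by (simp del: of_nat_Suc add: power_int_minus)
  have p: "q powi (2 * int (Suc a)) = q ^ Suc a * q ^ Suc a"
    by (metis mult_2 of_nat_add power_add power_int_of_nat)
  show ?thesis unfolding e p using q by (simp add: algebra_simps)
qed

lemma lemmaB:
  assumes q: "(q::'a::field) \<noteq> 0" and q2: "q ^ 2 \<noteq> 1"
  shows "qshuffle q (fwt q (-1) a) gs w = uw q a w \<and> qshuffle q (fwt q (-1) a) hs w = q ^ a * uw q (Suc a) w"
proof (induction w arbitrary: a)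
  case Nil
  then show ?case by (simp add: qshuffle_Nil)
next
  case (Cons c w)
  have IH1: "qshuffle q (fwt q (-1) b) gs w = uw q b w" for b using Cons.IH by blast
  have IH2: "qshuffle q (fwt q (-1) b) hs w = q ^ b * uw q (Suc b) w" for b using Cons.IH by blast
  show ?case
  proof (cases c)
    case X
    have 1: "qshuffle q (fwt q (-1) a) gs (c # w) = (- qint q (int a + 1) + q powi (- 2 * int a) * q ^ a) * uw q (Suc a) w"
      unfolding X qshuffle_Cons dvX_fwt tw_fwt_X dv_gs_X qshuffle_smult_left IH1 IH2
      by (simp add: algebra_simps)
    have 2: "qshuffle q (fwt q (-1) a) hs (c # w) = - qint q (int a + 1) * q ^ Suc a * uw q (Suc (Suc a)) w"
      unfolding X qshuffle_Cons dvX_fwt tw_fwt_X dv_hs_X qshuffle_smult_left qshuffle_zero_right IH1 IH2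
      by (simp add: algebra_simps)
    show ?thesis unfolding 1 2 scalarB1[OF q q2] using X by (simp add: algebra_simps)
  next
    case Y
    have 1: "qshuffle q (fwt q (-1) a) gs (c # w) = uw q a (c # w)"
      unfolding Y qshuffle_Cons dvY_fwt tw_fwt_Y dv_gs_Y qshuffle_smult_left qshuffle_zero_right IH1 IH2
      by simp
    have 2: "qshuffle q (fwt q (-1) a) hs (c # w) = q ^ a * uw q (Suc a) (c # w)"
    proof (cases a)
      case 0
      then show ?thesis
        unfolding Y qshuffle_Cons dvY_fwt tw_fwt_Y dv_hs_Y qshuffle_smult_left IH1 IH2
        by (simp add: qint1[OF q q2])
    next
      case (Suc a')
      have "qshuffle q (fwt q (-1) a) hs (c # w) = (qint q (int (Suc a')) * q ^ a' + q powi (2 * int (Suc a'))) * uw q (Suc a') w"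
        unfolding Y Suc qshuffle_Cons dvY_fwt tw_fwt_Y dv_hs_Y qshuffle_smult_left IH1 IH2
        by (simp add: algebra_simps)
      then show ?thesis unfolding scalarB2[OF q qint1[OF q q2]] using Y Suc by simp
    qed
    show ?thesis using 1 2 by simp
  qed
qed

lemma psum_0[simp]: "psum w 0 = 0" by (simp add: psum_def)
lemma psum_Cons_Suc[simp]: "psum (c # w) (Suc i) = bar c + psum w i" by (simp add: psum_def)

lemma rw_psum:
  "rw q a w = (if (\<forall>i<length w. 0 \<le> int a + psum w (Suc i)) \<and> int a + psum w (length w) = 0
     then (\<Prod>i<length w. qint q (1 + int a + psum w (Suc i))) else 0)"
proof (induction w arbitrary: a)
  case Nil
  then show ?case by simp
next
  case (Cons c w)
  have cond: "(\<forall>i<length (c # w). 0 \<le> int a + psum (c # w) (Suc i)) \<longleftrightarrow>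
     0 \<le> int a + bar c \<and> (\<forall>i<length w. 0 \<le> (int a + bar c) + psum w (Suc i))"
    by (simp only: length_Cons All_less_Suc2 psum_Cons_Suc psum_0) (simp add: algebra_simps)
  have prod: "(\<Prod>i<length (c # w). qint q (1 + int a + psum (c # w) (Suc i))) =
     qint q (1 + (int a + bar c)) * (\<Prod>i<length w. qint q (1 + (int a + bar c) + psum w (Suc i)))"
    by (simp only: length_Cons prod.lessThan_Suc_shift psum_Cons_Suc psum_0) (simp add: algebra_simps)
  have fin: "int a + psum (c # w) (length (c # w)) = (int a + bar c) + psum w (length w)" by simp
  show ?case
  proof (cases c)
    case X
    have e: "int a + bar c = int (Suc a)" using X by (simp add: bar_def)
    show ?thesis unfolding cond prod fin e using Cons.IH[of "Suc a"] X
      by (auto simp: add.commute add.left_commute)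
  next
    case Y
    show ?thesis
    proof (cases a)
      case 0
      then show ?thesis unfolding cond using Y by (simp add: bar_def)
    next
      case (Suc a')
      have e: "int a + bar c = int a'" using Y Suc by (simp add: bar_def)
      show ?thesis unfolding cond prod fin e using Cons.IH[of a'] Y Suc
        by (auto simp: add.commute add.left_commute)
    qed
  qed
qed

lemma C_eq:
  assumes "qint q 1 = 1"
  shows "C q n w = (if length w = 2 * n then rw q 0 w else 0)"
proof (cases "length w = 2 * n")
  case True
  have cat: "catalan w \<longleftrightarrow> (\<forall>i<length w. 0 \<le> psum w (Suc i)) \<and> psum w (length w) = 0"
  proof
    assume "catalan w"
    then have h1: "\<And>i. 1 \<le> i \<and> i \<le> length w - 1 \<Longrightarrow> psum w i \<ge> 0" and h2: "psum w (length w) = 0"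
      unfolding catalan_def by auto
    have "0 \<le> psum w (Suc i)" if "i < length w" for i
    proof (cases "Suc i = length w")
      case True then show ?thesis using h2 by simp
    next
      case False then show ?thesis using that h1[of "Suc i"] by simp
    qed
    then show "(\<forall>i<length w. 0 \<le> psum w (Suc i)) \<and> psum w (length w) = 0" using h2 by auto
  next
    assume h: "(\<forall>i<length w. 0 \<le> psum w (Suc i)) \<and> psum w (length w) = 0"
    show "catalan w" unfolding catalan_def
    proof (intro conjI allI impI)
      fix i assume "1 \<le> i \<and> i \<le> length w - 1"
      then have "i - 1 < length w" "Suc (i - 1) = i" by auto
      then show "0 \<le> psum w i" using h by metis
    qed (use h in auto)
  qed
  have pr: "(\<Prod>i\<le>2 * n. qint q (1 + psum w i)) = (\<Prod>i<length w. qint q (1 + int 0 + psum w (Suc i)))"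
    using True assms by (simp add: prod.atMost_shift)
  show ?thesis unfolding C_def rw_psum using True cat pr by auto
qed (simp add: C_def)

definition cr :: "nat \<Rightarrow> letter list" where "cr k = concat (replicate k [X, Y])"

lemma cr_Suc: "cr (Suc k) = X # Y # cr k" by (simp add: cr_def)
lemma cr_len: "length (cr k) = 2 * k" by (induction k) (simp_all add: cr_def)

lemma gs_cr: "(gs (cr k) :: 'a::field) = 1"
  by (induction k) (simp_all add: cr_def)

lemma gs_hs_nz: "((gs v :: 'a::field) \<noteq> 0 \<longrightarrow> (\<exists>k. v = cr k)) \<and> ((hs v :: 'a::field) \<noteq> 0 \<longrightarrow> (\<exists>k. v = Y # cr k))"
proof (induction v)
  case Nil
  then show ?case by (auto simp: cr_def intro: exI[of _ 0])
next
  case (Cons c v)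
  then show ?case
  proof (cases c)
    case X
    have "\<exists>k. X # v = cr k" if "(gs (X # v) :: 'a) \<noteq> 0"
    proof -
      from that have "(hs v :: 'a) \<noteq> 0" by simp
      then obtain k where "v = Y # cr k" using Cons.IH by blast
      then have "X # v = cr (Suc k)" by (simp add: cr_Suc)
      then show ?thesis by blast
    qed
    then show ?thesis using X by auto
  qed (use Cons in auto)
qed

lemma Gt_eq: "Gt k v = (if v = cr k then 1 else 0)"
  by (simp add: Gt_def word_def cr_def)

lemma fwt_len: "fwt q s a u \<noteq> 0 \<Longrightarrow> length u = 2 * length (filter (\<lambda>c. c = X) u) + a"
proof (induction u arbitrary: a)
  case Nil
  then show ?case by (simp split: if_splits)
next
  case (Cons c u)
  show ?case
  proof (cases c)
    case X
    then show ?thesis using Cons by auto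
  next
    case Y
    with Cons.prems have "a \<noteq> 0" "fwt q s (a - 1) u \<noteq> 0" by (cases a; auto)+
    then show ?thesis using Cons.IH[of "a - 1"] Y by auto
  qed
qed

lemma fwt_s: "fwt q s a u = s ^ length (filter (\<lambda>c. c = X) u) * fwt q 1 a u"
proof (induction u arbitrary: a)
  case (Cons c u)
  then show ?case by (cases c) (simp_all add: ac_simps)
qed simp

definition Dexp :: "'a::field \<Rightarrow> nat \<Rightarrow> 'a vec" where
  "Dexp q n = (\<lambda>w. if length w = 2 * n then fwt q (-1) 0 w else 0)"

lemma Dexp_sum:
  assumes q: "(q::'a::field) \<noteq> 0" and q2: "q ^ 2 \<noteq> 1" and n: "n > 0"
  shows "(\<Sum>i\<le>n. qshuffle q (Dexp q i) (Gt (n - i)) w) = 0"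
proof (cases "length w = 2 * n")
  case True
  have "qshuffle q (fwt q (-1) 0) gs w = (\<Sum>i\<le>n. qshuffle q (Dexp q i) (Gt (n - i)) w)"
  proof (rule qshuffle_pointwise)
    fix u v :: "letter list" assume uv: "length u + length v = length w"
    show "fwt q (-1) 0 u * gs v = (\<Sum>i\<le>n. Dexp q i u * Gt (n - i) v)"
    proof (cases "\<exists>k. v = cr k")
      case True
      then obtain k where k: "v = cr k" by blast
      have kn: "k \<le> n" and lu: "length u = 2 * (n - k)" using uv k cr_len[of k] \<open>length w = 2 * n\<close> by auto
      have "(\<Sum>i\<le>n. Dexp q i u * Gt (n - i) v) = (\<Sum>i\<le>n. if i = n - k then fwt q (-1) 0 u else 0)"
      proof (rule sum.cong[OF refl])
        fix i assume i: "i \<in> {..n}"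
        have "v = cr (n - i) \<longleftrightarrow> n - i = k" using k cr_len by (metis mult_left_cancel zero_neq_numeral)
        also have "\<dots> \<longleftrightarrow> i = n - k" using i kn by auto
        finally show "Dexp q i u * Gt (n - i) v = (if i = n - k then fwt q (-1) 0 u else 0)"
          unfolding Gt_eq Dexp_def using lu by auto
      qed
      also have "\<dots> = fwt q (-1) 0 u" by simp
      finally show ?thesis using k by (simp add: gs_cr)
    next
      case False
      then have "gs v = (0::'a)" using gs_hs_nz[of v] by blast
      moreover have "Gt j v = (0::'a)" for j using False Gt_eq[of j v] by auto
      ultimately show ?thesis by simp
    qed
  qed simp
  moreover have "qshuffle q (fwt q (-1) 0) gs w = uw q 0 w" using lemmaB[OF q q2] by blast
  moreover have "uw q 0 w = 0" using True n by (cases w rule: list.exhaust; cases "hd w") auto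
  ultimately show ?thesis by simp
next
  case False
  have "qshuffle q (Dexp q i) (Gt (n - i)) w = 0" if "i \<le> n" for i
  proof -
    have "qshuffle q (Dexp q i) (Gt (n - i)) w = (\<Sum>j\<in>{}. qshuffle q (\<lambda>u. 0) (\<lambda>u. 0) w)"
    proof (rule qshuffle_pointwise)
      fix u v :: "letter list" assume uv: "length u + length v = length w"
      show "Dexp q i u * Gt (n - i) v = (\<Sum>j\<in>{}. 0 * 0)"
        using uv False that cr_len[of "n - i"] by (auto simp: Dexp_def Gt_eq)
    qed simp
    then show ?thesis by simp
  qed
  then show ?thesis by simp
qed

lemma D_eq:
  assumes q: "(q::'a::field) \<noteq> 0" and q2: "q ^ 2 \<noteq> 1"
  shows "D q n = Dexp q n"
proof (induction n rule: less_induct)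
  case (less n)
  show ?case
  proof (cases "n = 0")
    case True
    then show ?thesis by (auto simp: Dexp_def word_def fun_eq_iff)
  next
    case False
    show ?thesis
    proof
      fix w
      have "D q n w = - (\<Sum>i<n. qshuffle q (D q i) (Gt (n - i)) w)"
        using False by simp
      also have "\<dots> = - (\<Sum>i<n. qshuffle q (Dexp q i) (Gt (n - i)) w)"
        using less by simp
      also have "\<dots> = Dexp q n w"
      proof -
        have "(\<Sum>i\<le>n. qshuffle q (Dexp q i) (Gt (n - i)) w) = 0"
          using Dexp_sum[OF q q2] False by simp
        moreover have "qshuffle q (Dexp q n) (Gt (n - n)) w = Dexp q n w"
          by (simp add: Gt_def qshuffle_unit)
        ultimately show ?thesis by (simp add: lessThan_Suc_atMost[symmetric] add_eq_0_iff)
      qed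
      finally show "D q n w = Dexp q n w" .
    qed
  qed
qed

lemma powi_diff_nat: "(q::'a::field) \<noteq> 0 \<Longrightarrow> q powi (int a - int b) = q ^ a * inverse q ^ b"
  by (simp add: power_int_diff power_inverse divide_inverse)

lemma main_pw:
  assumes q: "(q::'a::field) \<noteq> 0" and uv: "length u + length v = 2 * n"
  shows "fwt q q 0 u * fwt q (inverse q) 0 v =
    (\<Sum>i\<le>n. ((-1) ^ n * q powi (2 * int i - int n) * Dexp q i u) * Dexp q (n - i) v)"
proof (cases "fwt q 1 0 u = 0 \<or> fwt q 1 0 v = 0")
  case True
  then show ?thesis
  proof -
    have a: "fwt q s 0 u * fwt q s' 0 v = 0" for s s' :: 'a
      using True by (auto simp: fwt_s[of q s] fwt_s[of q s'])
    have b: "Dexp q i u * Dexp q j v = 0" for i j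
      using a[of "-1" "-1"] by (simp add: Dexp_def)
    have l: "fwt q q 0 u * fwt q (inverse q) 0 v = 0" using a by simp
    have r: "((-1) ^ n * q powi (2 * int i - int n) * Dexp q i u) * Dexp q (n - i) v = 0" for i
      using b[of i "n - i"] by auto
    show ?thesis unfolding l r by simp
  qed
next
  case False
  obtain xu where xu: "length (filter (\<lambda>c. c = X) u) = xu" by blast
  obtain xv where xv: "length (filter (\<lambda>c. c = X) v) = xv" by blast
  have lu: "length u = 2 * xu" using False fwt_len[of q 1 0 u] xu by auto
  have lv: "length v = 2 * xv" using False fwt_len[of q 1 0 v] xv by auto
  have nn: "xu + xv = n" using uv lu lv by simp
  have Du: "Dexp q i u = (if i = xu then (-1) ^ xu * fwt q 1 0 u else 0)" for i
    unfolding Dexp_def lu using fwt_s[of q "-1" 0 u] xu by simp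
  have Dv: "Dexp q j v = (if j = xv then (-1) ^ xv * fwt q 1 0 v else 0)" for j
    unfolding Dexp_def lv using fwt_s[of q "-1" 0 v] xv by simp
  let ?c = "(-1) ^ n * q powi (2 * int xu - int n) * ((-1) ^ xu * fwt q 1 0 u) * ((-1) ^ xv * fwt q 1 0 v)"
  have "(\<Sum>i\<le>n. ((-1) ^ n * q powi (2 * int i - int n) * Dexp q i u) * Dexp q (n - i) v)
      = (\<Sum>i\<le>n. if i = xu then ?c else 0)"
  proof (rule sum.cong[OF refl])
    fix i assume "i \<in> {..n}"
    show "((-1) ^ n * q powi (2 * int i - int n) * Dexp q i u) * Dexp q (n - i) v = (if i = xu then ?c else 0)"
    proof (cases "i = xu")
      case True
      have "n - i = xv" using True nn by simp
      then show ?thesis unfolding Du Dv using True by simp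
    next
      case False
      then show ?thesis unfolding Du by simp
    qed
  qed
  also have "\<dots> = ?c" using nn by simp
  also have "\<dots> = ((-1) ^ (xu + xv) * (-1) ^ xu * (-1) ^ xv) * q powi (int xu - int xv) * (fwt q 1 0 u * fwt q 1 0 v)"
  proof -
    have "2 * int xu - int n = int xu - int xv" using nn by linarith
    then have e: "q powi (2 * int xu - int n) = q powi (int xu - int xv)" by (simp only:)
    show ?thesis unfolding e using nn by (simp add: ac_simps)
  qed
  also have "\<dots> = q ^ xu * inverse q ^ xv * (fwt q 1 0 u * fwt q 1 0 v)"
  proof -
    have "((-1::'a) ^ (xu + xv) * (-1) ^ xu * (-1) ^ xv) = 1"
    proof -
      have "xu + xv + xu + xv = 2 * (xu + xv)" by simp
      then show ?thesis by (simp only: power_add[symmetric]) (simp add: power_mult)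
    qed
    then show ?thesis using powi_diff_nat[OF q] by simp
  qed
  also have "\<dots> = fwt q q 0 u * fwt q (inverse q) 0 v"
    using fwt_s[of q q 0 u] fwt_s[of q "inverse q" 0 v] xu xv by (simp add: ac_simps)
  finally show ?thesis ..
qed

theorem proposition11p9:
  fixes q :: "'a::field" and n :: nat
  assumes "q \<noteq> 0"
    and "\<forall>m::nat. m > 0 \<longrightarrow> q ^ m \<noteq> 1"
  shows "C q n = smult_vec ((-1) ^ n)
           (sum_vec (\<lambda>i. smult_vec (q powi (2 * int i - int n)) (qshuffle q (D q i) (D q (n - i)))) {..n})"
proof
  fix w
  have q: "q \<noteq> 0" by fact
  have q2: "q ^ 2 \<noteq> 1" using assms(2) by auto
  have Dq: "D q = Dexp q" using D_eq[OF q q2] by auto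
  have "smult_vec ((-1) ^ n)
           (sum_vec (\<lambda>i. smult_vec (q powi (2 * int i - int n)) (qshuffle q (D q i) (D q (n - i)))) {..n}) w
     = (\<Sum>i\<le>n. qshuffle q (\<lambda>u. ((-1) ^ n * q powi (2 * int i - int n)) * Dexp q i u) (Dexp q (n - i)) w)"
    by (simp only: smult_vec_def sum_vec_def Dq qshuffle_smult_left sum_distrib_left mult.assoc)
  also have "\<dots> = C q n w"
  proof (cases "length w = 2 * n")
    case True
    have "qshuffle q (fwt q q 0) (fwt q (inverse q) 0) w =
      (\<Sum>i\<le>n. qshuffle q (\<lambda>u. ((-1) ^ n * q powi (2 * int i - int n)) * Dexp q i u) (Dexp q (n - i)) w)"
      by (rule qshuffle_pointwise) (use True main_pw[OF q] in auto)
    then show ?thesis using lemmaC[OF q, of 0 0 w] C_eq[OF qint1[OF q q2], of n w] True by simp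
  next
    case False
    have "qshuffle q (\<lambda>u. 0) (\<lambda>u. 0) w =
      (\<Sum>i\<le>n. qshuffle q (\<lambda>u. ((-1) ^ n * q powi (2 * int i - int n)) * Dexp q i u) (Dexp q (n - i)) w)"
    proof (rule qshuffle_pointwise)
      fix u v :: "letter list" assume "length u + length v = length w"
      then show "0 * 0 = (\<Sum>i\<le>n. ((-1) ^ n * q powi (2 * int i - int n) * Dexp q i u) * Dexp q (n - i) v)"
        using False by (auto simp: Dexp_def intro!: sum.neutral)
    qed simp
    then show ?thesis using C_eq[OF qint1[OF q q2], of n w] False by (simp add: qshuffle_zero_left)
  qed
  finally show "C q n w = smult_vec ((-1) ^ n)
           (sum_vec (\<lambda>i. smult_vec (q powi (2 * int i - int n)) (qshuffle q (D q i) (D q (n - i)))) {..n}) w" ..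
qed

end
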